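(* Let $B$ be an almost complex Banach manifold, $z_0\in B$, $M>0$, and let $f$ be a holomorphic function on $B$ with $0<|f|<M$ on $B$. Then for all $z\in B$, $$|f(z)|\le |f(z_0)|^{\alpha(z)}M^{1-\alpha(z)},\qquad \alpha(z)=e^{-\kappa_B(z,z_0)},$$ where $\kappa_B$ is the Kobayashi distance of $B$ (and $\alpha(z)=0$ if $\kappa_B(z,z_0)=\infty$).
   Context: $\mathbb D$ is the open unit disk. A holomorphic disk in an almost complex Banach manifold $B$ is a $J$-holomorphic map $h:\mathbb D\to B$; a holomorphic function on $B$ is a $J$-holomorphic map $B\to\mathbb C$ (complex-linear real differential). Kobayashi distance: $\kappa_B(z,z')=\inf\sum_{j=1}^N\log\frac{1+|\zeta_j|}{1-|\zeta_j|}$ over all chains of holomorphic disks $h_j:\mathbb D\to B$ and points $\zeta_j\in\mathbb D$ with $h_1(0)=z'$, $h_{j+1}(0)=h_j(\zeta_j)$ ($1\le j<N$), $h_N(\zeta_N)=z$; it is $\infty$ if no such chain exists. *)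

theory Defs
  imports "HOL-Analysis.Analysis"
begin

text \<open>The manifold is the whole topological space of type 'b.  The almost complex structure is given in
  local coordinates: Jc (U,phi) x is a bounded real-linear operator on 'e for
  x in phi ` U, with Jc^2 = -id, continuous in x, and compatible with the
  differentials of the transition maps.\<close>

type_synonym ('b, 'e) chart = "'b set \<times> ('b \<Rightarrow> 'e)"

definition is_chart :: "('b::topological_space, 'e::banach) chart \<Rightarrow> bool" where
  "is_chart c \<longleftrightarrow> (case c of (U, \<phi>) \<Rightarrow>
     open U \<and> continuous_on U \<phi> \<and> inj_on \<phi> U \<and> open (\<phi> ` U) \<and>
     continuous_on (\<phi> ` U) (inv_into U \<phi>))"

definition transition :: "('b, 'e) chart \<Rightarrow> ('b, 'e) chart \<Rightarrow> 'e \<Rightarrow> 'e" where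
  "transition c d = snd d \<circ> inv_into (fst c) (snd c)"

definition overlap :: "('b, 'e) chart \<Rightarrow> ('b, 'e) chart \<Rightarrow> 'e set" where
  "overlap c d = snd c ` (fst c \<inter> fst d)"

definition almost_complex_banach_manifold ::
  "('b::topological_space, 'e::banach) chart set \<Rightarrow> (('b, 'e) chart \<Rightarrow> 'e \<Rightarrow> 'e \<Rightarrow>\<^sub>L 'e) \<Rightarrow> bool" where
  "almost_complex_banach_manifold A Jc \<longleftrightarrow>
     (\<forall>c\<in>A. is_chart c) \<and>
     (\<Union>c\<in>A. fst c) = UNIV \<and>
     (\<forall>c\<in>A. \<forall>d\<in>A. \<exists>Dt :: 'e \<Rightarrow> 'e \<Rightarrow>\<^sub>L 'e.
        continuous_on (overlap c d) Dt \<and>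
        (\<forall>x\<in>overlap c d. (transition c d has_derivative blinfun_apply (Dt x)) (at x) \<and>
           Dt x o\<^sub>L Jc c x = Jc d (transition c d x) o\<^sub>L Dt x)) \<and>
     (\<forall>c\<in>A. continuous_on (snd c ` fst c) (Jc c) \<and>
        (\<forall>x\<in>snd c ` fst c. Jc c x o\<^sub>L Jc c x = - id_blinfun))"

definition holomorphic_disk ::
  "('b::topological_space, 'e::banach) chart set \<Rightarrow> (('b, 'e) chart \<Rightarrow> 'e \<Rightarrow> 'e \<Rightarrow>\<^sub>L 'e)
     \<Rightarrow> (complex \<Rightarrow> 'b) \<Rightarrow> bool" where
  "holomorphic_disk A Jc h \<longleftrightarrow>
     continuous_on (ball 0 1) h \<and>
     (\<forall>c\<in>A. \<forall>\<zeta>\<in>ball 0 1. h \<zeta> \<in> fst c \<longrightarrow>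
        (\<exists>L. ((snd c \<circ> h) has_derivative L) (at \<zeta>) \<and>
             (\<forall>v. L (\<i> * v) = Jc c (snd c (h \<zeta>)) (L v))))"

definition holomorphic_function ::
  "('b::topological_space, 'e::banach) chart set \<Rightarrow> (('b, 'e) chart \<Rightarrow> 'e \<Rightarrow> 'e \<Rightarrow>\<^sub>L 'e)
     \<Rightarrow> ('b \<Rightarrow> complex) \<Rightarrow> bool" where
  "holomorphic_function A Jc f \<longleftrightarrow>
     (\<forall>c\<in>A. \<forall>x\<in>snd c ` fst c.
        (\<exists>L. ((f \<circ> inv_into (fst c) (snd c)) has_derivative L) (at x) \<and>
             (\<forall>v. L (Jc c x v) = \<i> * L v)))"

definition kobayashi_chain ::
  "('b::topological_space, 'e::banach) chart set \<Rightarrow> (('b, 'e) chart \<Rightarrow> 'e \<Rightarrow> 'e \<Rightarrow>\<^sub>L 'e)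
     \<Rightarrow> nat \<Rightarrow> (nat \<Rightarrow> complex \<Rightarrow> 'b) \<Rightarrow> (nat \<Rightarrow> complex) \<Rightarrow> 'b \<Rightarrow> 'b \<Rightarrow> bool" where
  "kobayashi_chain A Jc N h \<zeta> z z' \<longleftrightarrow>
     N \<ge> 1 \<and>
     (\<forall>j<N. holomorphic_disk A Jc (h j) \<and> norm (\<zeta> j) < 1) \<and>
     h 0 0 = z' \<and>
     (\<forall>j. j + 1 < N \<longrightarrow> h (j + 1) 0 = h j (\<zeta> j)) \<and>
     h (N - 1) (\<zeta> (N - 1)) = z"

text \<open>Kobayashi distance (value \<infinity> if no chain exists, as Inf {} = \<infinity> in ereal).\<close>

definition kobayashi_dist ::
  "('b::topological_space, 'e::banach) chart set \<Rightarrow> (('b, 'e) chart \<Rightarrow> 'e \<Rightarrow> 'e \<Rightarrow>\<^sub>L 'e)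
     \<Rightarrow> 'b \<Rightarrow> 'b \<Rightarrow> ereal" where
  "kobayashi_dist A Jc z z' =
     Inf {ereal (\<Sum>j<N. ln ((1 + norm (\<zeta> j)) / (1 - norm (\<zeta> j)))) | N h \<zeta>.
            kobayashi_chain A Jc N h \<zeta> z z'}"

definition exp_neg_ereal :: "ereal \<Rightarrow> real" where
  "exp_neg_ereal k = (case k of ereal r \<Rightarrow> exp (- r) | PInfty \<Rightarrow> 0 | MInfty \<Rightarrow> 0)"

end

theory Submission
  imports Defs "HOL-Complex_Analysis.Complex_Analysis"
begin
lemma key1:
  fixes w a :: complex
  assumes "Re w < 0" "Re a < 0"
  shows "norm (w - a) < norm (w + cnj a)"
proof -
  have "(norm (w - a))^2 < (norm (w + cnj a))^2"
  proof -
    have "Re w * Re a > 0" using assms by (simp add: mult_neg_neg)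
    thus ?thesis unfolding cmod_power2 by (simp add: power2_eq_square algebra_simps)
  qed
  then show ?thesis by (simp add: power_less_imp_less_base)
qed

lemma key2:
  fixes w a :: complex and r :: real
  assumes "Re w < 0" "Re a < 0" "0 \<le> r" "r < 1" "norm (w - a) \<le> r * norm (w + cnj a)"
  shows "Re w \<le> Re a * ((1 - r) / (1 + r))"
proof -
  have "(norm (w - a))^2 \<le> (r * norm (w + cnj a))^2"
    using assms by (simp add: power_mono)
  hence "(Re w - Re a)^2 + (Im w - Im a)^2 \<le> r^2 * ((Re w + Re a)^2 + (Im w - Im a)^2)"
    by (simp add: cmod_power2 power_mult_distrib)
  moreover have "r^2 * (Im w - Im a)^2 \<le> (Im w - Im a)^2"
    using assms by (simp add: mult_left_le_one_le power_le_one)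
  ultimately have "(Re w - Re a)^2 \<le> r^2 * (Re w + Re a)^2"
    by (simp add: distrib_left)
  hence "(Re w - Re a)^2 \<le> (r * (Re w + Re a))^2"
    by (simp add: power_mult_distrib)
  hence "\<bar>Re w - Re a\<bar> \<le> \<bar>r * (Re w + Re a)\<bar>"
    using abs_le_square_iff by blast
  hence "Re w - Re a \<le> r * (- Re w - Re a)" 
  proof -
    have "\<bar>r * (Re w + Re a)\<bar> = r * (- Re w - Re a)"
      using assms by (simp add: abs_mult)
    moreover have "Re w - Re a \<le> \<bar>Re w - Re a\<bar>" by linarith
    ultimately show ?thesis using \<open>\<bar>Re w - Re a\<bar> \<le> _\<close> by linarith
  qed
  hence "Re w * (1 + r) \<le> Re a * (1 - r)" by (simp add: algebra_simps)
  thus ?thesis using assms by (simp add: field_simps)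
qed

lemma harnack:
  fixes g :: "complex \<Rightarrow> complex" and M :: real
  assumes holg: "g holomorphic_on ball 0 1"
    and bd: "\<And>\<zeta>. \<zeta> \<in> ball 0 1 \<Longrightarrow> 0 < norm (g \<zeta>) \<and> norm (g \<zeta>) < M"
    and z: "norm \<zeta> < 1"
  shows "ln (norm (g \<zeta>) / M) \<le> ln (norm (g 0) / M) * ((1 - norm \<zeta>) / (1 + norm \<zeta>))"
proof -
  have M: "M > 0" using bd[of 0] norm_ge_zero[of "g 0"] by (meson centre_in_ball le_less_trans zero_less_one)
  have h1: "(\<lambda>x. g x / complex_of_real M) holomorphic_on ball 0 1"
    using holg M by (intro holomorphic_intros) auto
  have h2: "\<And>x. x \<in> ball 0 1 \<Longrightarrow> g x / complex_of_real M \<noteq> 0"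
    using bd M by fastforce
  obtain G where holG: "G holomorphic_on ball 0 1"
    and eG: "\<And>x. x \<in> ball 0 1 \<Longrightarrow> exp (G x) = g x / complex_of_real M"
    using holomorphic_logarithm_exists[OF convex_ball open_ball h1 h2, of 0] by auto
  have ReG: "Re (G x) = ln (norm (g x) / M)" if "x \<in> ball 0 1" for x
  proof -
    have "norm (exp (G x)) = norm (g x) / M" using eG[OF that] M by (simp add: norm_divide)
    hence "exp (Re (G x)) = norm (g x) / M" by (simp add: norm_exp_eq_Re)
    thus ?thesis by (metis ln_exp)
  qed
  have neg: "Re (G x) < 0" if "x \<in> ball 0 1" for x
  proof -
    have "norm (g x) / M < 1" using bd[OF that] M by simp
    moreover have "0 < norm (g x) / M" using bd[OF that] M by simp
    ultimately show ?thesis using ReG[OF that] by (simp add: ln_less_zero)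
  qed
  define a where "a = G 0"
  have a: "Re a < 0" using neg[of 0] by (simp add: a_def)
  define F where "F = (\<lambda>x. (G x - a) / (G x + cnj a))"
  have dnz: "G x + cnj a \<noteq> 0" if "x \<in> ball 0 1" for x
  proof
    assume "G x + cnj a = 0"
    hence "Re (G x + cnj a) = 0" by simp
    thus False using neg[OF that] a by simp
  qed
  have holF: "F holomorphic_on ball 0 1"
    unfolding F_def using holG dnz by (intro holomorphic_intros) auto
  have F0: "F 0 = 0" by (simp add: F_def a_def)
  have Flt: "norm (F x) < 1" if "norm x < 1" for x
  proof -
    have xb: "x \<in> ball 0 1" using that by simp
    have "norm (G x - a) < norm (G x + cnj a)" using key1[OF neg[OF xb] a] .
    thus ?thesis using dnz[OF xb] by (simp add: F_def norm_divide divide_less_eq)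
  qed
  have "norm (F \<zeta>) \<le> norm \<zeta>" using Schwarz_Lemma(1)[OF holF F0 Flt z] .
  have zb: "\<zeta> \<in> ball 0 1" using z by simp
  have "norm (G \<zeta> - a) \<le> norm \<zeta> * norm (G \<zeta> + cnj a)"
    using \<open>norm (F \<zeta>) \<le> norm \<zeta>\<close> dnz[OF zb] by (simp add: F_def norm_divide divide_le_eq)
  hence "Re (G \<zeta>) \<le> Re a * ((1 - norm \<zeta>) / (1 + norm \<zeta>))"
    using key2[OF neg[OF zb] a norm_ge_zero z] by simp
  thus ?thesis using ReG[OF zb] ReG[of 0] by (simp add: a_def)
qed
lemma clin:
  fixes D :: "complex \<Rightarrow> complex"
  assumes "linear D" "\<And>v. D (\<i> * v) = \<i> * D v"
  shows "D = (\<lambda>v. D 1 * v)"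
proof
  fix v :: complex
  have v: "v = Re v *\<^sub>R 1 + Re (v * -\<i>) *\<^sub>R (\<i> * 1)"
    by (simp add: complex_eq_iff)
  have "D v = Re v *\<^sub>R D 1 + Re (v * -\<i>) *\<^sub>R D (\<i> * 1)"
    by (subst v) (simp add: linear_add[OF assms(1)] linear_scale[OF assms(1)])
  also have "\<dots> = D 1 * v" using assms(2)[of 1]
    by (simp add: scaleR_conv_of_real complex_eq_iff algebra_simps)
  finally show "D v = D 1 * v" .
qed

lemma comp_hol:
  fixes A :: "('b::topological_space, 'e::banach) chart set"
  assumes man: "almost_complex_banach_manifold A Jc"
    and hf: "holomorphic_function A Jc f"
    and hd: "holomorphic_disk A Jc h"
  shows "(f \<circ> h) holomorphic_on ball 0 1"
  unfolding holomorphic_on_def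
proof
  fix \<zeta> :: complex assume z: "\<zeta> \<in> ball 0 1"
  have "h \<zeta> \<in> (\<Union>c\<in>A. fst c)" using man by (simp add: almost_complex_banach_manifold_def)
  then obtain c where cA: "c \<in> A" and hc: "h \<zeta> \<in> fst c" by blast
  obtain U \<phi> where c: "c = (U, \<phi>)" by fastforce
  have ch: "is_chart c" using man cA by (simp add: almost_complex_banach_manifold_def)
  hence oU: "open U" and inj: "inj_on \<phi> U" by (auto simp: is_chart_def c)
  have hU: "h \<zeta> \<in> U" using hc c by simp
  obtain L where L: "((\<phi> \<circ> h) has_derivative L) (at \<zeta>)"
    and LJ: "\<And>v. L (\<i> * v) = Jc c (\<phi> (h \<zeta>)) (L v)"
    using hd cA z hc unfolding holomorphic_disk_def c by fastforce
  have xin: "\<phi> (h \<zeta>) \<in> snd c ` fst c" using hU c by simp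
  obtain Lf where Lf: "((f \<circ> inv_into U \<phi>) has_derivative Lf) (at (\<phi> (h \<zeta>)))"
    and LfJ: "\<And>v. Lf (Jc c (\<phi> (h \<zeta>)) v) = \<i> * Lf v"
    using hf cA xin unfolding holomorphic_function_def c by fastforce
  have d1: "((\<lambda>w. (f \<circ> inv_into U \<phi>) ((\<phi> \<circ> h) w)) has_derivative (\<lambda>v. Lf (L v))) (at \<zeta>)"
    using has_derivative_compose[OF L, of "f \<circ> inv_into U \<phi>" Lf] Lf by (simp add: o_def)
  define S where "S = ball 0 1 \<inter> h -` U"
  have contS: "continuous_on (ball 0 1) h" using hd by (simp add: holomorphic_disk_def)
  have oS: "open S" unfolding S_def using continuous_open_preimage[OF contS open_ball oU] .
  have zS: "\<zeta> \<in> S" using z hU by (simp add: S_def)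
  have d2: "((f \<circ> h) has_derivative (\<lambda>v. Lf (L v))) (at \<zeta>)"
    by (rule has_derivative_transform_within_open[OF d1 oS zS]) (use inj in \<open>auto simp: S_def\<close>)
  have lin: "linear (\<lambda>v. Lf (L v))"
    using has_derivative_linear[OF d2] .
  have eq: "(\<lambda>v. Lf (L v)) = (\<lambda>v. Lf (L 1) * v)"
    using clin[OF lin] LJ LfJ by simp
  have "((f \<circ> h) has_field_derivative Lf (L 1)) (at \<zeta>)"
    unfolding has_field_derivative_def using d2 eq by metis
  thus "(f \<circ> h) field_differentiable at \<zeta> within ball 0 1"
    unfolding field_differentiable_def by (meson has_field_derivative_at_within)
qed
lemma inf_lemma:
  fixes X :: "real set" and q :: real
  assumes "q > 0" "\<And>S. S \<in> X \<Longrightarrow> 0 \<le> S \<and> exp (- S) \<le> q"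
  shows "exp_neg_ereal (Inf (ereal ` X)) \<le> q"
proof (cases "X = {}")
  case True
  have "(Inf (ereal ` X)) = PInfty" using True by (simp add: top_ereal_def)
  thus ?thesis using assms by (simp add: exp_neg_ereal_def)
next
  case False
  then obtain S0 where S0: "S0 \<in> X" by blast
  have lb: "ereal (- ln q) \<le> Inf (ereal ` X)"
  proof (rule Inf_greatest)
    fix y assume "y \<in> ereal ` X"
    then obtain S where S: "S \<in> X" "y = ereal S" by blast
    have "exp (- S) \<le> q" using assms(2)[OF S(1)] by simp
    hence "- S \<le> ln q" using assms(1) by (metis exp_ln exp_le_cancel_iff)
    thus "ereal (- ln q) \<le> y" using S by simp
  qed
  have ub: "Inf (ereal ` X) \<le> ereal S0" using S0 by (simp add: Inf_lower)
  obtain k where k: "Inf (ereal ` X) = ereal k" using lb ub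
    by (cases "Inf (ereal ` X)") auto
  have "- ln q \<le> k" using lb k by simp
  hence "exp (- k) \<le> exp (ln q)" by simp
  thus ?thesis using k assms(1) by (simp add: exp_neg_ereal_def)
qed

lemma final_ineq:
  fixes a b M \<alpha> :: real
  assumes "M > 0" "a > 0" "b > 0" "ln (a / M) \<le> ln (b / M) * \<alpha>"
  shows "a \<le> b powr \<alpha> * M powr (1 - \<alpha>)"
proof -
  have "a / M = exp (ln (a / M))" using assms by simp
  also have "\<dots> \<le> exp (\<alpha> * ln (b / M))" using assms(4) by (simp add: mult.commute)
  also have "\<dots> = (b / M) powr \<alpha>" using assms by (simp add: powr_def)
  also have "\<dots> = b powr \<alpha> / M powr \<alpha>" using assms by (simp add: powr_divide)
  finally have "a \<le> M * (b powr \<alpha> / M powr \<alpha>)" using assms by (simp add: pos_divide_le_eq mult.commute)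
  also have "\<dots> = b powr \<alpha> * M powr (1 - \<alpha>)" using assms by (simp add: powr_diff)
  finally show ?thesis .
qed

theorem mainTheorem2:
  fixes A :: "('b::topological_space, 'e::banach) chart set"
    and Jc :: "('b, 'e) chart \<Rightarrow> 'e \<Rightarrow> 'e \<Rightarrow>\<^sub>L 'e"
    and f :: "'b \<Rightarrow> complex" and z0 :: 'b and M :: real
  assumes "almost_complex_banach_manifold A Jc"
    and "holomorphic_function A Jc f"
    and "M > 0"
    and "\<forall>z. 0 < norm (f z) \<and> norm (f z) < M"
  shows "\<forall>z. norm (f z) \<le> norm (f z0) powr (exp_neg_ereal (kobayashi_dist A Jc z z0))
                         * M powr (1 - exp_neg_ereal (kobayashi_dist A Jc z z0))"
proof
  fix z
  define u where "u = (\<lambda>w. ln (norm (f w) / M))"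
  have uneg: "u w < 0" for w using assms(3,4) unfolding u_def by (simp add: ln_less_zero)
  define \<rho> where "\<rho> = (\<lambda>t::complex. ln ((1 + norm t) / (1 - norm t)))"
  have rho: "0 \<le> \<rho> t \<and> exp (- \<rho> t) = (1 - norm t) / (1 + norm t)" if "norm t < 1" for t
  proof -
    have "(1 + norm t) / (1 - norm t) \<ge> 1" using that by (simp add: field_simps)
    hence "0 \<le> \<rho> t" unfolding \<rho>_def by simp
    moreover have "exp (- \<rho> t) = (1 - norm t) / (1 + norm t)"
    proof -
      have p: "(1 + norm t) / (1 - norm t) > 0"
        using that by (intro divide_pos_pos) (auto intro: add_pos_nonneg)
      show ?thesis unfolding \<rho>_def exp_minus exp_ln[OF p] by simp
    qed
    ultimately show ?thesis by simp
  qed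
  have disk: "u (h (\<zeta>::complex)) \<le> u (h 0) * exp (- \<rho> \<zeta>)"
    if hd: "holomorphic_disk A Jc h" and z: "norm \<zeta> < 1" for h \<zeta>
  proof -
    have hol: "(f \<circ> h) holomorphic_on ball 0 1" using comp_hol[OF assms(1,2) hd] .
    show ?thesis using harnack[OF hol _ z] assms(4) rho[OF z] unfolding u_def by auto
  qed
  have chain: "u (h k (\<zeta> k)) \<le> u z0 * exp (- (\<Sum>j<Suc k. \<rho> (\<zeta> j)))"
    if ch: "kobayashi_chain A Jc N h \<zeta> z z0" and k: "k < N" for N h \<zeta> k
    using k
  proof (induction k)
    case 0
    have "holomorphic_disk A Jc (h 0) \<and> norm (\<zeta> 0) < 1" using ch 0 by (simp add: kobayashi_chain_def)
    moreover have "h 0 0 = z0" using ch by (simp add: kobayashi_chain_def)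
    ultimately show ?case using disk by fastforce
  next
    case (Suc k)
    have hk: "holomorphic_disk A Jc (h (Suc k)) \<and> norm (\<zeta> (Suc k)) < 1"
      using ch Suc by (simp add: kobayashi_chain_def)
    have lk: "h (Suc k) 0 = h k (\<zeta> k)" using ch Suc.prems by (simp add: kobayashi_chain_def)
    have "u (h (Suc k) (\<zeta> (Suc k))) \<le> u (h k (\<zeta> k)) * exp (- \<rho> (\<zeta> (Suc k)))"
      using disk hk lk by metis
    also have "\<dots> \<le> u z0 * exp (- (\<Sum>j<Suc k. \<rho> (\<zeta> j))) * exp (- \<rho> (\<zeta> (Suc k)))"
      using Suc by (intro mult_right_mono) auto
    also have "\<dots> = u z0 * exp (- (\<Sum>j<Suc (Suc k). \<rho> (\<zeta> j)))"
      by (simp add: exp_add[symmetric] exp_minus_inverse mult_exp_exp algebra_simps)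
    finally show ?case .
  qed
  define X where "X = {(\<Sum>j<N. \<rho> (\<zeta> j)) | N h \<zeta>. kobayashi_chain A Jc N h \<zeta> z z0}"
  have kd: "kobayashi_dist A Jc z z0 = Inf (ereal ` X)"
    unfolding kobayashi_dist_def X_def \<rho>_def by (rule arg_cong[where f=Inf]) blast
  define q where "q = u z / u z0"
  have q: "q > 0" using uneg[of z] uneg[of z0] by (simp add: q_def divide_neg_neg)
  have "exp_neg_ereal (Inf (ereal ` X)) \<le> q"
  proof (rule inf_lemma[OF q])
    fix S assume "S \<in> X"
    then obtain N h \<zeta> where S: "S = (\<Sum>j<N. \<rho> (\<zeta> j))" and ch: "kobayashi_chain A Jc N h \<zeta> z z0"
      unfolding X_def by blast
    have N: "N \<ge> 1" and nz: "\<forall>j<N. norm (\<zeta> j) < 1" using ch by (auto simp: kobayashi_chain_def)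
    have "0 \<le> S" unfolding S using nz rho by (intro sum_nonneg) auto
    moreover have "u (h (N - 1) (\<zeta> (N - 1))) \<le> u z0 * exp (- (\<Sum>j<Suc (N - 1). \<rho> (\<zeta> j)))"
      using chain[OF ch, of "N - 1"] N by simp
    hence "u (h (N - 1) (\<zeta> (N - 1))) \<le> u z0 * exp (- (\<Sum>j<N. \<rho> (\<zeta> j)))"
      using N by (simp del: sum.lessThan_Suc)
    hence "u z \<le> u z0 * exp (- S)" using ch N unfolding S by (simp add: kobayashi_chain_def)
    hence "exp (- S) \<le> q" using uneg[of z0] unfolding q_def by (simp add: le_divide_eq mult.commute)
    ultimately show "0 \<le> S \<and> exp (- S) \<le> q" by simp
  qed
  hence al: "exp_neg_ereal (kobayashi_dist A Jc z z0) \<le> q" using kd by simp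
  have "u z \<le> u z0 * exp_neg_ereal (kobayashi_dist A Jc z z0)"
  proof -
    have "u z0 * q \<le> u z0 * exp_neg_ereal (kobayashi_dist A Jc z z0)"
      using al uneg[of z0] by (simp add: mult_left_mono_neg)
    moreover have "u z0 * q = u z" using uneg[of z0] by (simp add: q_def)
    ultimately show ?thesis by simp
  qed
  thus "norm (f z) \<le> norm (f z0) powr (exp_neg_ereal (kobayashi_dist A Jc z z0))
                         * M powr (1 - exp_neg_ereal (kobayashi_dist A Jc z z0))"
    using final_ineq[OF assms(3)] assms(4) unfolding u_def by blast
qed

end
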